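(* Assume $\xi>0$ and $K=1$. Then $\mathcal M^{N,1}_{\tilde J=0}(M_1,M_2)$ is the closure of $\mathring{\mathcal M}^{N,1}(M_1,M_2)$ in $\mathcal M^{N,1}(M_1,M_2)$.
   Context: Fix integers $N,M_1,M_2\ge0$ and $\xi>0$. $\mathcal M^{N,1}(M_1,M_2)$ is the space of tuples $(X,Y,I,J,\tilde X,\tilde Y,\tilde I,\tilde J,S)$ with $X,Y\in\mathrm{End}(\mathbb C^{M_1})$, $I\in\mathrm{Hom}(\mathbb C^N,\mathbb C^{M_1})$, $J\in\mathrm{Hom}(\mathbb C^{M_1},\mathbb C^N)$, $\tilde X,\tilde Y\in\mathrm{End}(\mathbb C^{M_2})$, $\tilde I\in\mathrm{Hom}(\mathbb C,\mathbb C^{M_2})$, $\tilde J\in\mathrm{Hom}(\mathbb C^{M_2},\mathbb C)$, $S\in\mathrm{Hom}(\mathbb C^{M_1},\mathbb C^{M_2})$ satisfying $[X,Y]+IJ=0$, $[\tilde X,\tilde Y]+\tilde I\tilde J=0$ and stability $\mathbb C\langle X,Y\rangle\mathrm{Im}(I)=\mathbb C^{M_1}$, $\mathbb C\langle\tilde X,\tilde Y\rangle(\mathrm{Im}\tilde I+\mathrm{Im}S)=\mathbb C^{M_2}$, modulo $GL_{M_1}\times GL_{M_2}$ acting by $(g,h)$: $X\mapsto gXg^{-1}$, $Y\mapsto gYg^{-1}$, $I\mapsto gI$, $J\mapsto Jg^{-1}$, similarly for tilded maps with $h$, $S\mapsto hSg^{-1}$. $\mathring{\mathcal M}^{N,1}(M_1,M_2)$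 is the open subvariety defined by $\mathbb C\langle\tilde X,\tilde Y\rangle\mathrm{Im}(\tilde I)=\mathbb C^{M_2}$, and $\mathcal M^{N,1}_{\tilde J=0}(M_1,M_2)$ is the closed subvariety defined by $\tilde J=0$. *)

theory Defs
  imports "HOL-Analysis.Analysis"
begin

text \<open>Complex matrices / vectors of arbitrary finite size, represented as zero-padded
  functions on indices. The topology on these function spaces is the product
  topology (library instance), which on each finite-dimensional subspace of padded
  matrices is the usual Euclidean (analytic) topology.\<close>

type_synonym cvec = "nat \<Rightarrow> complex"
type_synonym cmat = "nat \<Rightarrow> nat \<Rightarrow> complex"

definition is_vec :: "nat \<Rightarrow> cvec \<Rightarrow> bool" where
  "is_vec m v \<longleftrightarrow> (\<forall>i. m \<le> i \<longrightarrow> v i = 0)"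

definition is_mat :: "nat \<Rightarrow> nat \<Rightarrow> cmat \<Rightarrow> bool" where
  "is_mat m n A \<longleftrightarrow> (\<forall>i j. (m \<le> i \<or> n \<le> j) \<longrightarrow> A i j = 0)"

definition mmul :: "nat \<Rightarrow> cmat \<Rightarrow> cmat \<Rightarrow> cmat" where
  "mmul k A B = (\<lambda>i j. \<Sum>l<k. A i l * B l j)"

definition mvec :: "nat \<Rightarrow> cmat \<Rightarrow> cvec \<Rightarrow> cvec" where
  "mvec k A v = (\<lambda>i. \<Sum>l<k. A i l * v l)"

definition id_mat :: "nat \<Rightarrow> cmat" where
  "id_mat m = (\<lambda>i j. if i = j \<and> i < m then 1 else 0)"

definition zero_mat :: cmat where "zero_mat = (\<lambda>i j. 0)"

inductive_set gen_space :: "nat \<Rightarrow> cmat \<Rightarrow> cmat \<Rightarrow> cvec set \<Rightarrow> cvec set"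
  for m X Y G where
  gen_base: "v \<in> G \<Longrightarrow> v \<in> gen_space m X Y G"
| gen_zero: "(\<lambda>i. 0) \<in> gen_space m X Y G"
| gen_add: "v \<in> gen_space m X Y G \<Longrightarrow> w \<in> gen_space m X Y G \<Longrightarrow> (\<lambda>i. v i + w i) \<in> gen_space m X Y G"
| gen_smult: "v \<in> gen_space m X Y G \<Longrightarrow> (\<lambda>i. c * v i) \<in> gen_space m X Y G"
| gen_X: "v \<in> gen_space m X Y G \<Longrightarrow> mvec m X v \<in> gen_space m X Y G"
| gen_Y: "v \<in> gen_space m X Y G \<Longrightarrow> mvec m Y v \<in> gen_space m X Y G"

definition img :: "nat \<Rightarrow> cmat \<Rightarrow> cvec set" where
  "img n A = {mvec n A w | w. is_vec n w}"

type_synonym quiv = "cmat \<times> cmat \<times> cmat \<times> cmat \<times> cmat \<times> cmat \<times> cmat \<times> cmat \<times> cmat"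

definition stab_locus :: "nat \<Rightarrow> nat \<Rightarrow> nat \<Rightarrow> quiv set" where
  "stab_locus N M1 M2 = {(X, Y, I, J, Xt, Yt, It, Jt, S).
     is_mat M1 M1 X \<and> is_mat M1 M1 Y \<and> is_mat M1 N I \<and> is_mat N M1 J \<and>
     is_mat M2 M2 Xt \<and> is_mat M2 M2 Yt \<and> is_mat M2 1 It \<and> is_mat 1 M2 Jt \<and>
     is_mat M2 M1 S \<and>
     (\<lambda>i j. mmul M1 X Y i j - mmul M1 Y X i j + mmul N I J i j) = zero_mat \<and>
     (\<lambda>i j. mmul M2 Xt Yt i j - mmul M2 Yt Xt i j + mmul 1 It Jt i j) = zero_mat \<and>
     {v. is_vec M1 v} \<subseteq> gen_space M1 X Y (img N I) \<and>
     {v. is_vec M2 v} \<subseteq> gen_space M2 Xt Yt (img 1 It \<union> img M1 S)}"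

definition invertible_mat :: "nat \<Rightarrow> cmat \<Rightarrow> cmat \<Rightarrow> bool" where
  "invertible_mat m g gi \<longleftrightarrow> is_mat m m g \<and> is_mat m m gi \<and>
     mmul m g gi = id_mat m \<and> mmul m gi g = id_mat m"

definition act :: "nat \<Rightarrow> nat \<Rightarrow> nat \<Rightarrow> cmat \<Rightarrow> cmat \<Rightarrow> cmat \<Rightarrow> cmat \<Rightarrow> quiv \<Rightarrow> quiv" where
  "act N M1 M2 g gi h hi q = (case q of (X, Y, I, J, Xt, Yt, It, Jt, S) \<Rightarrow>
     (mmul M1 (mmul M1 g X) gi, mmul M1 (mmul M1 g Y) gi, mmul M1 g I, mmul M1 J gi,
      mmul M2 (mmul M2 h Xt) hi, mmul M2 (mmul M2 h Yt) hi, mmul M2 h It, mmul M2 Jt hi,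
      mmul M1 (mmul M2 h S) gi))"

definition orbit :: "nat \<Rightarrow> nat \<Rightarrow> nat \<Rightarrow> quiv \<Rightarrow> quiv set" where
  "orbit N M1 M2 q = {q'. \<exists>g gi h hi. invertible_mat M1 g gi \<and> invertible_mat M2 h hi \<and>
      q' = act N M1 M2 g gi h hi q}"

definition moduli :: "nat \<Rightarrow> nat \<Rightarrow> nat \<Rightarrow> quiv set set" where
  "moduli N M1 M2 = orbit N M1 M2 ` stab_locus N M1 M2"

definition moduli_top :: "nat \<Rightarrow> nat \<Rightarrow> nat \<Rightarrow> quiv set topology" where
  "moduli_top N M1 M2 = topology (\<lambda>W. W \<subseteq> moduli N M1 M2 \<and>
     openin (top_of_set (stab_locus N M1 M2))
       {q \<in> stab_locus N M1 M2. orbit N M1 M2 q \<in> W})"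

definition moduli_open :: "nat \<Rightarrow> nat \<Rightarrow> nat \<Rightarrow> quiv set set" where
  "moduli_open N M1 M2 = orbit N M1 M2 ` {(X, Y, I, J, Xt, Yt, It, Jt, S) \<in> stab_locus N M1 M2.
      {v. is_vec M2 v} \<subseteq> gen_space M2 Xt Yt (img 1 It)}"

definition moduli_Jt0 :: "nat \<Rightarrow> nat \<Rightarrow> nat \<Rightarrow> quiv set set" where
  "moduli_Jt0 N M1 M2 = orbit N M1 M2 ` {(X, Y, I, J, Xt, Yt, It, Jt, S) \<in> stab_locus N M1 M2.
      Jt = zero_mat}"

lemma istopology_preimage:
  "istopology (\<lambda>W. W \<subseteq> M \<and> openin (top_of_set S) {q \<in> S. f q \<in> W})"
proof -
  have i: "{q \<in> S. f q \<in> U \<inter> V} = {q \<in> S. f q \<in> U} \<inter> {q \<in> S. f q \<in> V}" for U V by blast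
  have u: "{q \<in> S. f q \<in> \<Union>K} = (\<Union>U\<in>K. {q \<in> S. f q \<in> U})" for K by blast
  show ?thesis unfolding istopology_def i u by auto
qed

end

theory Submission
  imports Defs "HOL-Library.Function_Algebras" "Jordan_Normal_Form.Jordan_Normal_Form_Existence"
begin

definition tr :: "nat \<Rightarrow> cmat \<Rightarrow> complex" where "tr n A = (\<Sum>l<n. A l l)"
definition dotp :: "nat \<Rightarrow> cvec \<Rightarrow> cvec \<Rightarrow> complex" where "dotp n j u = (\<Sum>l<n. j l * u l)"

primrec pw :: "nat \<Rightarrow> cmat \<Rightarrow> nat \<Rightarrow> cmat" where
  "pw n A 0 = id_mat n"
| "pw n A (Suc k) = mmul n A (pw n A k)"

lemma mmul_assoc: "mmul n (mmul n A B) C = mmul n A (mmul n B C)"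
proof (intro ext)
  fix i j
  have "mmul n (mmul n A B) C i j = (\<Sum>m<n. \<Sum>l<n. A i l * B l m * C m j)"
    by (simp add: mmul_def sum_distrib_right)
  also have "\<dots> = (\<Sum>l<n. \<Sum>m<n. A i l * B l m * C m j)" by (rule sum.swap)
  also have "\<dots> = mmul n A (mmul n B C) i j"
    by (simp add: mmul_def sum_distrib_left mult.assoc)
  finally show "mmul n (mmul n A B) C i j = mmul n A (mmul n B C) i j" .
qed

lemma mvec_mmul: "mvec n (mmul n A B) v = mvec n A (mvec n B v)"
proof (intro ext)
  fix i
  have "mvec n (mmul n A B) v i = (\<Sum>m<n. \<Sum>l<n. A i l * B l m * v m)"
    by (simp add: mmul_def mvec_def sum_distrib_right)
  also have "\<dots> = (\<Sum>l<n. \<Sum>m<n. A i l * B l m * v m)" by (rule sum.swap)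
  also have "\<dots> = mvec n A (mvec n B v) i"
    by (simp add: mvec_def sum_distrib_left mult.assoc)
  finally show "mvec n (mmul n A B) v i = mvec n A (mvec n B v) i" .
qed

lemma tr_comm: "tr n (mmul n A B) = tr n (mmul n B A)"
proof -
  have "tr n (mmul n A B) = (\<Sum>l<n. \<Sum>m<n. A l m * B m l)" by (simp add: tr_def mmul_def)
  also have "\<dots> = (\<Sum>m<n. \<Sum>l<n. A l m * B m l)" by (rule sum.swap)
  also have "\<dots> = tr n (mmul n B A)" by (simp add: tr_def mmul_def mult.commute)
  finally show ?thesis .
qed

lemma mmul_diff_right: "mmul n A (B - C) = mmul n A B - mmul n A C"
  by (intro ext) (simp add: mmul_def algebra_simps sum_subtractf)
lemma mmul_diff_left: "mmul n (B - C) A = mmul n B A - mmul n C A"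
  by (intro ext) (simp add: mmul_def algebra_simps sum_subtractf)
lemma mmul_add_right: "mmul n A (B + C) = mmul n A B + mmul n A C"
  by (intro ext) (simp add: mmul_def algebra_simps sum.distrib)
lemma mmul_add_left: "mmul n (B + C) A = mmul n B A + mmul n C A"
  by (intro ext) (simp add: mmul_def algebra_simps sum.distrib)
lemma tr_diff: "tr n (A - B) = tr n A - tr n B"
  by (simp add: tr_def sum_subtractf)
lemma tr_add: "tr n (A + B) = tr n A + tr n B"
  by (simp add: tr_def sum.distrib)

lemma id_left: assumes "is_mat n n A" shows "mmul n (id_mat n) A = A"
proof (intro ext)
  fix i j
  show "mmul n (id_mat n) A i j = A i j"
  proof (cases "i < n")
    case True
    have "mmul n (id_mat n) A i j = (\<Sum>l<n. if l = i then A i j else 0)"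
      unfolding mmul_def id_mat_def by (intro sum.cong) auto
    also have "\<dots> = A i j" using True by simp
    finally show ?thesis .
  next
    case False then show ?thesis using assms by (simp add: mmul_def id_mat_def is_mat_def)
  qed
qed
lemma id_right: assumes "is_mat n n A" shows "mmul n A (id_mat n) = A"
proof (intro ext)
  fix i j
  show "mmul n A (id_mat n) i j = A i j"
  proof (cases "j < n")
    case True
    have "mmul n A (id_mat n) i j = (\<Sum>l<n. if l = j then A i j else 0)"
      unfolding mmul_def id_mat_def by (intro sum.cong) auto
    also have "\<dots> = A i j" using True by simp
    finally show ?thesis .
  next
    case False then show ?thesis using assms by (simp add: mmul_def id_mat_def is_mat_def)
  qed
qed

lemma is_mat_mmul: "is_mat n n A \<Longrightarrow> is_mat n n B \<Longrightarrow> is_mat n n (mmul n A B)"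
  by (auto simp: is_mat_def mmul_def)
lemma is_mat_id: "is_mat n n (id_mat n)"
  by (auto simp: is_mat_def id_mat_def)
lemma is_mat_pw: "is_mat n n A \<Longrightarrow> is_mat n n (pw n A k)"
  by (induct k) (auto simp: is_mat_id is_mat_mmul)

lemma pw_comm: "is_mat n n A \<Longrightarrow> mmul n A (pw n A k) = mmul n (pw n A k) A"
proof (induct k)
  case 0 then show ?case by (simp add: id_left id_right)
next
  case (Suc k)
  have "mmul n A (pw n A (Suc k)) = mmul n (mmul n A (pw n A k)) A"
  proof -
    have "mmul n A (pw n A (Suc k)) = mmul n A (mmul n (pw n A k) A)" using Suc by simp
    also have "\<dots> = mmul n (mmul n A (pw n A k)) A" by (simp only: mmul_assoc)
    finally show ?thesis .
  qed
  then show ?case by simp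
qed

lemma pw_Suc': "is_mat n n A \<Longrightarrow> pw n A (Suc k) = mmul n (pw n A k) A"
  using pw_comm by simp

lemma pw_add: "is_mat n n A \<Longrightarrow> mmul n (pw n A a) (pw n A b) = pw n A (a + b)"
  by (induct a) (auto simp: id_left is_mat_pw mmul_assoc)

lemma mmul_zero_right: "mmul n A 0 = 0"
  by (intro ext) (simp add: mmul_def)

lemma telescope:
  assumes pX: "is_mat n n X" and pY: "is_mat n n Y"
  shows "tr n (mmul n M (mmul n (pw n Y b) X - mmul n X (pw n Y b))) =
    (\<Sum>k<b. tr n (mmul n (mmul n (mmul n M (pw n Y k)) (mmul n Y X - mmul n X Y)) (pw n Y (b - Suc k))))"
proof (induct b arbitrary: M)
  case 0
  have "mmul n (id_mat n) X - mmul n X (id_mat n) = 0" using pX by (simp add: id_left id_right)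
  then show ?case by (simp add: mmul_def tr_def)
next
  case (Suc b)
  let ?C = "mmul n Y X - mmul n X Y"
  let ?P = "pw n Y b"
  have pC: "is_mat n n ?C" using pX pY by (auto simp: is_mat_def mmul_def)
  have eq: "mmul n (pw n Y (Suc b)) X - mmul n X (pw n Y (Suc b)) =
      mmul n Y (mmul n ?P X - mmul n X ?P) + mmul n ?C ?P"
    by (simp add: mmul_diff_right mmul_diff_left mmul_assoc)
  have "tr n (mmul n M (mmul n (pw n Y (Suc b)) X - mmul n X (pw n Y (Suc b)))) =
     tr n (mmul n (mmul n M Y) (mmul n ?P X - mmul n X ?P)) + tr n (mmul n (mmul n M ?C) ?P)"
    unfolding eq by (simp add: mmul_add_right tr_add mmul_assoc)
  also have "tr n (mmul n (mmul n M Y) (mmul n ?P X - mmul n X ?P)) =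
     (\<Sum>k<b. tr n (mmul n (mmul n (mmul n M (pw n Y (Suc k))) ?C) (pw n Y (Suc b - Suc (Suc k)))))"
    unfolding Suc by (simp add: mmul_assoc)
  also have "tr n (mmul n (mmul n M ?C) ?P) =
     tr n (mmul n (mmul n (mmul n M (pw n Y 0)) ?C) (pw n Y (Suc b - Suc 0)))"
    using pC by (simp add: mmul_assoc id_left)
  finally have *: "tr n (mmul n M (mmul n (pw n Y (Suc b)) X - mmul n X (pw n Y (Suc b)))) =
    (\<Sum>k<b. tr n (mmul n (mmul n (mmul n M (pw n Y (Suc k))) ?C) (pw n Y (Suc b - Suc (Suc k))))) +
    tr n (mmul n (mmul n (mmul n M (pw n Y 0)) ?C) (pw n Y (Suc b - Suc 0)))" .
  show ?case unfolding sum.lessThan_Suc_shift using * by (simp only: add.commute)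
qed

lemma trace_identity:
  assumes pX: "is_mat n n X" and pY: "is_mat n n Y"
  defines "C \<equiv> mmul n Y X - mmul n X Y"
  shows "tr n (mmul n (mmul n (pw n X a) (pw n Y b)) C) =
    - (\<Sum>k<b. tr n (mmul n (mmul n (mmul n (pw n Y (b - k)) (pw n X a)) (pw n Y k)) C))"
proof -
  let ?A = "pw n X a"
  have trm: "tr n (mmul n (mmul n (mmul n (pw n Y (b - k)) ?A) (pw n Y k)) C) =
      tr n (mmul n (mmul n (mmul n (mmul n Y ?A) (pw n Y k)) C) (pw n Y (b - Suc k)))"
    if k: "k < b" for k
  proof -
    have bk: "b - k = Suc (b - Suc k)" using k by simp
    have "tr n (mmul n (mmul n (mmul n (pw n Y (b - k)) ?A) (pw n Y k)) C) =
        tr n (mmul n (pw n Y (b - Suc k)) (mmul n Y (mmul n ?A (mmul n (pw n Y k) C))))"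
      unfolding bk pw_Suc'[OF pY] by (simp add: mmul_assoc)
    also have "\<dots> = tr n (mmul n (mmul n Y (mmul n ?A (mmul n (pw n Y k) C))) (pw n Y (b - Suc k)))"
      by (rule tr_comm)
    finally show ?thesis by (simp add: mmul_assoc)
  qed
  have "(\<Sum>k<b. tr n (mmul n (mmul n (mmul n (pw n Y (b - k)) ?A) (pw n Y k)) C)) =
      (\<Sum>k<b. tr n (mmul n (mmul n (mmul n (mmul n Y ?A) (pw n Y k)) C) (pw n Y (b - Suc k))))"
    using trm by simp
  also have "\<dots> = tr n (mmul n (mmul n Y ?A) (mmul n (pw n Y b) X - mmul n X (pw n Y b)))"
    unfolding C_def by (rule telescope[OF pX pY, symmetric])
  also have "\<dots> = tr n (mmul n Y (mmul n ?A (mmul n (pw n Y b) X))) - tr n (mmul n Y (mmul n ?A (mmul n X (pw n Y b))))"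
    by (simp add: mmul_diff_right tr_diff mmul_assoc)
  also have "tr n (mmul n Y (mmul n ?A (mmul n (pw n Y b) X))) = tr n (mmul n (mmul n ?A (mmul n (pw n Y b) X)) Y)"
    by (rule tr_comm)
  also have "tr n (mmul n Y (mmul n ?A (mmul n X (pw n Y b)))) = tr n (mmul n Y (mmul n X (mmul n ?A (pw n Y b))))"
  proof -
    have "mmul n (mmul n ?A X) (pw n Y b) = mmul n (mmul n X ?A) (pw n Y b)"
      using pw_comm[OF pX, of a] by simp
    then have "mmul n ?A (mmul n X (pw n Y b)) = mmul n X (mmul n ?A (pw n Y b))"
      by (simp only: mmul_assoc)
    then show ?thesis by simp
  qed
  also have "\<dots> = tr n (mmul n (mmul n X (mmul n ?A (pw n Y b))) Y)"
    by (rule tr_comm)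
  also have "\<dots> = tr n (mmul n X (mmul n ?A (mmul n (pw n Y b) Y)))"
    by (simp add: mmul_assoc)
  also have "\<dots> = tr n (mmul n (mmul n ?A (mmul n (pw n Y b) Y)) X)"
    by (rule tr_comm)
  finally have "(\<Sum>k<b. tr n (mmul n (mmul n (mmul n (pw n Y (b - k)) ?A) (pw n Y k)) C)) =
     tr n (mmul n (mmul n ?A (pw n Y b)) (mmul n X Y)) - tr n (mmul n (mmul n ?A (pw n Y b)) (mmul n Y X))"
    by (simp add: mmul_assoc)
  also have "\<dots> = - tr n (mmul n (mmul n ?A (pw n Y b)) C)"
    unfolding C_def by (simp add: mmul_diff_right tr_diff)
  finally show ?thesis by simp
qed

lemma mvec_id: "is_vec n v \<Longrightarrow> mvec n (id_mat n) v = v"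
proof (intro ext)
  fix i assume v: "is_vec n v"
  show "mvec n (id_mat n) v i = v i"
  proof (cases "i < n")
    case True
    have "mvec n (id_mat n) v i = (\<Sum>l<n. if l = i then v i else 0)"
      unfolding mvec_def id_mat_def by (intro sum.cong) auto
    then show ?thesis using True by simp
  next
    case False then show ?thesis using v by (simp add: mvec_def id_mat_def is_vec_def)
  qed
qed

lemma mvec_id_inner: "mvec n A (mvec n (id_mat n) v) = mvec n A v"
  unfolding mvec_def
proof (intro ext sum.cong refl)
  fix i l assume "l \<in> {..<n}"
  then have "(\<Sum>la<n. id_mat n l la * v la) = (\<Sum>la<n. if la = l then v l else 0)"
    by (intro sum.cong) (auto simp: id_mat_def)
  also have "\<dots> = v l" using \<open>l \<in> {..<n}\<close> by simp
  finally show "A i l * (\<Sum>la<n. id_mat n l la * v la) = A i l * v l" by simp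
qed

lemma is_vec_mvec: "is_mat n n A \<Longrightarrow> is_vec n (mvec n A v)"
  by (auto simp: is_vec_def is_mat_def mvec_def)

lemma mvec_add: "mvec n A (\<lambda>i. v i + w i) = (\<lambda>i. mvec n A v i + mvec n A w i)"
  by (simp add: mvec_def algebra_simps sum.distrib)
lemma mvec_smult: "mvec n A (\<lambda>i. c * v i) = (\<lambda>i. c * mvec n A v i)"
  by (simp add: mvec_def algebra_simps sum_distrib_left)
lemma mvec_zero: "mvec n A (\<lambda>i. 0) = (\<lambda>i. 0)"
  by (simp add: mvec_def)

context
  fixes n :: nat and X Y :: cmat and iv jv :: cvec
  assumes pX: "is_mat n n X" and pY: "is_mat n n Y" and piv: "is_vec n iv"
  and rel: "\<And>l m. mmul n X Y l m - mmul n Y X l m + iv l * jv m = 0"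
begin

definition "uu a b = mvec n (pw n X a) (mvec n (pw n Y b) iv)"

lemma CC: "mmul n Y X - mmul n X Y = (\<lambda>l m. iv l * jv m)"
  using rel by (intro ext) (simp add: algebra_simps eq_neg_iff_add_eq_0)

lemma trC: "tr n (mmul n M (mmul n Y X - mmul n X Y)) = dotp n jv (mvec n M iv)"
proof -
  have "tr n (mmul n M (mmul n Y X - mmul n X Y)) = (\<Sum>l<n. \<Sum>m<n. jv l * (M l m * iv m))"
    unfolding CC unfolding tr_def mmul_def by (simp add: algebra_simps)
  also have "\<dots> = dotp n jv (mvec n M iv)"
    by (simp add: dotp_def mvec_def sum_distrib_left)
  finally show ?thesis .
qed

lemma comm_vec: assumes "dotp n jv w = 0"
  shows "mvec n X (mvec n Y w) = mvec n Y (mvec n X w)"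
proof (intro ext)
  fix i
  have "mvec n X (mvec n Y w) i = mvec n (mmul n X Y) w i" by (simp add: mvec_mmul)
  also have "\<dots> = (\<Sum>m<n. (mmul n Y X i m - iv i * jv m) * w m)"
  proof -
    have r: "mmul n X Y i m = mmul n Y X i m - iv i * jv m" for m
      using rel[of i m] by (simp add: algebra_simps eq_diff_eq)
    show ?thesis unfolding mvec_def r ..
  qed
  also have "\<dots> = mvec n (mmul n Y X) w i - iv i * dotp n jv w"
    by (simp add: mvec_def dotp_def algebra_simps sum_subtractf sum_distrib_left)
  also have "\<dots> = mvec n Y (mvec n X w) i" using assms by (simp add: mvec_mmul)
  finally show "mvec n X (mvec n Y w) i = mvec n Y (mvec n X w) i" .
qed

definition "HH l \<longleftrightarrow> (\<forall>a b. a + b < l \<longrightarrow> dotp n jv (uu a b) = 0)"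

lemma L1: assumes H: "HH l" shows "a + d \<le> l \<Longrightarrow>
   mvec n Y (mvec n (pw n X a) (mvec n (pw n Y d) iv)) = mvec n (pw n X a) (mvec n (pw n Y (Suc d)) iv)"
proof (induct a)
  case 0 then show ?case using is_vec_mvec[OF pY] by (simp add: mvec_mmul mvec_id_inner mvec_id)
next
  case (Suc a)
  have "dotp n jv (uu a d) = 0" using H Suc(2) by (simp add: HH_def)
  then have c: "mvec n X (mvec n Y (uu a d)) = mvec n Y (mvec n X (uu a d))" by (rule comm_vec)
  have "mvec n Y (mvec n (pw n X (Suc a)) (mvec n (pw n Y d) iv)) = mvec n Y (mvec n X (uu a d))"
    by (simp add: mvec_mmul uu_def)
  also have "\<dots> = mvec n X (mvec n Y (uu a d))" using c by simp
  also have "\<dots> = mvec n X (mvec n (pw n X a) (mvec n (pw n Y (Suc d)) iv))"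
    using Suc by (simp add: uu_def)
  finally show ?case by (simp add: mvec_mmul)
qed

lemma L2: assumes H: "HH l" shows "a + c + d \<le> Suc l \<Longrightarrow>
   mvec n (pw n Y c) (mvec n (pw n X a) (mvec n (pw n Y d) iv)) = mvec n (pw n X a) (mvec n (pw n Y (c + d)) iv)"
proof (induct c)
  case 0
  have "is_vec n (mvec n (pw n X a) (mvec n (pw n Y d) iv))"
    using is_mat_pw[OF pX, of a] by (auto simp: is_vec_def is_mat_def mvec_def)
  then show ?case by (simp add: mvec_id)
next
  case (Suc c)
  have "mvec n (pw n Y (Suc c)) (mvec n (pw n X a) (mvec n (pw n Y d) iv)) =
     mvec n Y (mvec n (pw n X a) (mvec n (pw n Y (c + d)) iv))"
    using Suc by (simp add: mvec_mmul)
  also have "\<dots> = mvec n (pw n X a) (mvec n (pw n Y (Suc (c + d))) iv)"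
    using L1[OF H] Suc(2) by simp
  finally show ?case by simp
qed

lemma HH_step: assumes H: "HH l" shows "HH (Suc l)"
  unfolding HH_def
proof (intro allI impI)
  fix a b assume ab: "a + b < Suc l"
  let ?C = "mmul n Y X - mmul n X Y"
  have "tr n (mmul n (mmul n (pw n X a) (pw n Y b)) ?C) = dotp n jv (uu a b)"
    by (simp add: trC uu_def mvec_mmul)
  moreover have "tr n (mmul n (mmul n (mmul n (pw n Y (b - k)) (pw n X a)) (pw n Y k)) ?C) = dotp n jv (uu a b)"
    if k: "k < b" for k
  proof -
    have "tr n (mmul n (mmul n (mmul n (pw n Y (b - k)) (pw n X a)) (pw n Y k)) ?C) =
       dotp n jv (mvec n (pw n Y (b - k)) (mvec n (pw n X a) (mvec n (pw n Y k) iv)))"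
      by (simp add: trC mvec_mmul)
    also have "\<dots> = dotp n jv (uu a b)"
      using L2[OF H, of a "b - k" k] k ab by (simp add: uu_def)
    finally show ?thesis .
  qed
  ultimately have "dotp n jv (uu a b) = - (of_nat b * dotp n jv (uu a b))"
    using trace_identity[OF pX pY, of a b] by simp
  then have "(1 + of_nat b) * dotp n jv (uu a b) = 0" by (simp add: distrib_right eq_neg_iff_add_eq_0)
  moreover have "(1 + of_nat b :: complex) \<noteq> 0"
    by (metis of_nat_Suc of_nat_eq_0_iff nat.distinct(1) add.commute)
  ultimately show "dotp n jv (uu a b) = 0" by simp
qed

lemma HH_all: "HH l"
proof (induct l)
  case 0 show ?case by (simp add: HH_def)
next
  case (Suc l) show ?case by (rule HH_step[OF Suc])
qed

lemma uu_Y: "mvec n Y (uu a b) = uu a (Suc b)"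
  unfolding uu_def using L1[OF HH_all[of "a + b"], of a b] by simp

inductive_set spanU :: "cvec set" where
  su_base: "uu a b \<in> spanU"
| su_zero: "(\<lambda>i. 0) \<in> spanU"
| su_add: "v \<in> spanU \<Longrightarrow> w \<in> spanU \<Longrightarrow> (\<lambda>i. v i + w i) \<in> spanU"
| su_smult: "v \<in> spanU \<Longrightarrow> (\<lambda>i. c * v i) \<in> spanU"

lemma spanU_X: "v \<in> spanU \<Longrightarrow> mvec n X v \<in> spanU"
proof (induct rule: spanU.induct)
  case (su_base a b)
  have "mvec n X (uu a b) = uu (Suc a) b" by (simp add: uu_def mvec_mmul)
  then show ?case by (metis spanU.su_base)
qed (auto simp: mvec_add mvec_smult mvec_zero intro: spanU.intros)

lemma spanU_Y: "v \<in> spanU \<Longrightarrow> mvec n Y v \<in> spanU"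
proof (induct rule: spanU.induct)
  case (su_base a b)
  then show ?case by (metis spanU.su_base uu_Y)
qed (auto simp: mvec_add mvec_smult mvec_zero intro: spanU.intros)

lemma spanU_dot: "v \<in> spanU \<Longrightarrow> dotp n jv v = 0"
  by (induct rule: spanU.induct)
     (insert HH_all, auto simp: HH_def dotp_def algebra_simps sum.distrib sum_distrib_left[symmetric])

lemma gen_spanU: assumes G: "\<And>g. g \<in> G \<Longrightarrow> \<exists>c. g = (\<lambda>i. c * iv i)"
  shows "v \<in> gen_space n X Y G \<Longrightarrow> v \<in> spanU"
proof (induct rule: gen_space.induct)
  case (gen_base v)
  then obtain c where c: "v = (\<lambda>i. c * iv i)" using G by blast
  have "uu 0 0 = iv" using piv by (simp add: uu_def mvec_id)
  then show ?case unfolding c by (metis spanU.su_base spanU.su_smult)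
qed (auto intro: spanU.intros spanU_X spanU_Y)

end

lemma nakajima:
  assumes pX: "is_mat n n X" and pY: "is_mat n n Y" and pI: "is_mat n 1 It" and pJ: "is_mat 1 n Jt"
  and rel: "(\<lambda>i j. mmul n X Y i j - mmul n Y X i j + mmul 1 It Jt i j) = Defs.zero_mat"
  and st: "{v. is_vec n v} \<subseteq> gen_space n X Y (img 1 It)"
  shows "Jt = Defs.zero_mat"
proof -
  let ?iv = "\<lambda>l. It l 0" and ?jv = "\<lambda>m. Jt 0 m"
  have piv: "is_vec n ?iv" using pI by (simp add: is_vec_def is_mat_def)
  have rel': "mmul n X Y l m - mmul n Y X l m + ?iv l * ?jv m = 0" for l m
    using fun_cong[OF fun_cong[OF rel, of l], of m] by (simp add: mmul_def Defs.zero_mat_def)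
  have G: "\<exists>c. g = (\<lambda>i. c * ?iv i)" if "g \<in> img 1 It" for g
    using that by (auto simp: img_def mvec_def mult.commute)
  have "Jt 0 m = 0" if m: "m < n" for m
  proof -
    let ?e = "\<lambda>i. if i = m then (1::complex) else 0"
    have "is_vec n ?e" using m by (simp add: is_vec_def)
    then have "?e \<in> gen_space n X Y (img 1 It)" using st by blast
    then have "?e \<in> spanU n X Y ?iv" using gen_spanU[OF pX pY piv rel'] G by metis
    then have "dotp n ?jv ?e = 0" by (rule spanU_dot[OF pX pY piv rel'])
    then show ?thesis using m by (simp add: dotp_def if_distrib sum.delta cong: if_cong)
  qed
  note J0 = this
  show ?thesis
  proof (intro ext)
    fix x y
    show "Jt x y = Defs.zero_mat x y"
    proof (cases "x = 0 \<and> y < n")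
      case True then show ?thesis using J0 by (simp add: Defs.zero_mat_def)
    next
      case False then have "1 \<le> x \<or> n \<le> y" by auto
      then show ?thesis using pJ unfolding Defs.zero_mat_def is_mat_def by blast
    qed
  qed
qed

primrec beta :: "cmat \<Rightarrow> nat \<Rightarrow> nat" where
  "beta J 0 = 0"
| "beta J (Suc i) = beta J i + (if J i (Suc i) = 1 then 0 else 1)"

lemma beta_mono: "i \<le> j \<Longrightarrow> beta J i \<le> beta J j"
  by (induct j) (auto simp: le_Suc_eq)

lemma beta_strict: "i < m \<Longrightarrow> J i (Suc i) \<noteq> 1 \<Longrightarrow> beta J i < beta J m"
  using beta_mono[of "Suc i" m J] by simp

definition "dmat n J = (\<lambda>i j. if i = j \<and> i < n then of_nat (beta J i) else (0::complex))"
definition "wvec n J = (\<lambda>i. if i < n \<and> J i (Suc i) \<noteq> 1 then 1 else (0::complex))"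
definition "evec m = (\<lambda>i. if i = m then 1 else (0::complex))"

definition jlike :: "nat \<Rightarrow> cmat \<Rightarrow> bool" where
  "jlike n J \<longleftrightarrow> is_mat n n J \<and> (\<forall>i j. J i j \<noteq> 0 \<longrightarrow> j = i \<or> j = Suc i) \<and>
     (\<forall>i. J i (Suc i) = 0 \<or> J i (Suc i) = 1) \<and> (\<forall>i. J i (Suc i) = 1 \<longrightarrow> J i i = J (Suc i) (Suc i))"

lemma is_mat_dmat: "is_mat n n (dmat n J)"
  by (auto simp: is_mat_def dmat_def)

lemma mmul_right_diag: "j < n \<Longrightarrow> mmul n A (dmat n J) i j = A i j * of_nat (beta J j)"
proof -
  assume j: "j < n"
  have "mmul n A (dmat n J) i j = (\<Sum>l<n. if l = j then A i j * of_nat (beta J j) else 0)"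
    unfolding mmul_def dmat_def by (intro sum.cong) auto
  then show ?thesis using j by simp
qed

lemma mmul_left_diag: "i < n \<Longrightarrow> mmul n (dmat n J) A i j = of_nat (beta J i) * A i j"
proof -
  assume i: "i < n"
  have "mmul n (dmat n J) A i j = (\<Sum>l<n. if l = i then of_nat (beta J i) * A i j else 0)"
    unfolding mmul_def dmat_def by (intro sum.cong) auto
  then show ?thesis using i by simp
qed

lemma jlike_comm: assumes J: "jlike n J" shows "mmul n J (dmat n J) = mmul n (dmat n J) J"
proof (intro ext)
  fix i j
  have pJ: "is_mat n n J" using J by (simp add: jlike_def)
  show "mmul n J (dmat n J) i j = mmul n (dmat n J) J i j"
  proof (cases "i < n \<and> j < n")
    case True
    have "J i j * of_nat (beta J j) = of_nat (beta J i) * J i j"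
    proof (cases "J i j = 0")
      case False
      then have "j = i \<or> j = Suc i" using J by (simp add: jlike_def)
      moreover have "j = Suc i \<Longrightarrow> J i (Suc i) = 1" using J False by (auto simp: jlike_def)
      ultimately show ?thesis by auto
    qed simp
    then show ?thesis using True by (simp add: mmul_right_diag mmul_left_diag)
  next
    case False
    then show ?thesis using is_mat_mmul[OF pJ is_mat_dmat, of J] is_mat_mmul[OF is_mat_dmat pJ, of J]
      by (auto simp: is_mat_def)
  qed
qed

context
  fixes n :: nat and J :: cmat
  assumes J: "jlike n J"
begin

abbreviation "SS \<equiv> gen_space n J (dmat n J) {wvec n J}"

lemma pJ: "is_mat n n J" using J by (simp add: jlike_def)

lemma SS_vec: "v \<in> SS \<Longrightarrow> is_vec n v"
proof (induct rule: gen_space.induct)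
  case (gen_X v) show ?case by (rule is_vec_mvec[OF pJ])
next
  case (gen_Y v) show ?case by (rule is_vec_mvec[OF is_mat_dmat])
qed (auto simp: is_vec_def wvec_def)

lemma SS_add: "v \<in> SS \<Longrightarrow> w \<in> SS \<Longrightarrow> (\<lambda>i. v i + w i) \<in> SS" by (rule gen_add)
lemma SS_smult: "v \<in> SS \<Longrightarrow> (\<lambda>i. c * v i) \<in> SS" by (rule gen_smult)

lemma SS_diag: assumes v: "v \<in> SS" shows "(\<lambda>i. (of_nat (beta J i) - c) * v i) \<in> SS"
proof -
  have pv: "is_vec n v" using SS_vec[OF v] .
  have "(\<lambda>i. mvec n (dmat n J) v i + (- c) * v i) \<in> SS"
    by (intro SS_add SS_smult gen_Y v)
  moreover have "(\<lambda>i. mvec n (dmat n J) v i + (- c) * v i) = (\<lambda>i. (of_nat (beta J i) - c) * v i)"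
  proof (intro ext)
    fix i
    show "mvec n (dmat n J) v i + (- c) * v i = (of_nat (beta J i) - c) * v i"
    proof (cases "i < n")
      case True
      have "mvec n (dmat n J) v i = (\<Sum>l<n. if l = i then of_nat (beta J i) * v i else 0)"
        unfolding mvec_def dmat_def by (intro sum.cong) auto
      then show ?thesis using True by (simp add: algebra_simps)
    next
      case False then show ?thesis using pv by (simp add: mvec_def dmat_def is_vec_def)
    qed
  qed
  ultimately show ?thesis by simp
qed

lemma SS_prod: assumes v: "v \<in> SS" and F: "finite F"
  shows "(\<lambda>i. (\<Prod>c\<in>F. (of_nat (beta J i) - c)) * v i) \<in> SS"
  using F
proof (induct F rule: finite_induct)
  case empty then show ?case using v by simp
next
  case (insert c F)
  then show ?case using SS_diag[OF insert(3), of c] by (simp add: mult.assoc)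
qed

lemma w_in: "wvec n J \<in> SS" by (rule gen_base) simp

lemma proj_in: "(\<lambda>i. if beta J i = k then wvec n J i else 0) \<in> SS"
proof -
  let ?F = "(of_nat ` ({0..beta J n} - {k})) :: complex set"
  let ?p = "\<lambda>i. \<Prod>c\<in>?F. (of_nat (beta J i) - c)"
  let ?kap = "\<Prod>c\<in>?F. (of_nat k - c)"
  have kap: "?kap \<noteq> 0" by (auto simp: prod_zero_iff)
  have pi: "(\<lambda>i. ?p i * wvec n J i) \<in> SS" by (rule SS_prod[OF w_in]) simp
  have "(\<lambda>i. inverse ?kap * (?p i * wvec n J i)) \<in> SS" by (rule SS_smult[OF pi])
  moreover have "(\<lambda>i. inverse ?kap * (?p i * wvec n J i)) = (\<lambda>i. if beta J i = k then wvec n J i else 0)"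
  proof (intro ext)
    fix i
    show "inverse ?kap * (?p i * wvec n J i) = (if beta J i = k then wvec n J i else 0)"
    proof (cases "i < n")
      case False then show ?thesis by (simp add: wvec_def)
    next
      case True
      have bi: "beta J i \<le> beta J n" using True by (intro beta_mono) simp
      show ?thesis
      proof (cases "beta J i = k")
        case True then show ?thesis using kap by simp
      next
        case False
        then have "of_nat (beta J i) \<in> ?F" using bi by auto
        then have "?p i = 0" by (auto simp: prod_zero_iff intro!: bexI[of _ "of_nat (beta J i)"])
        then show ?thesis using False by simp
      qed
    qed
  qed
  ultimately show ?thesis by simp
qed

lemma e_in: "m < n \<Longrightarrow> evec m \<in> SS"
proof (induct "n - m" arbitrary: m rule: less_induct)
  case less
  show ?case
  proof (cases "J m (Suc m) = 1")
    case True
    have sm: "Suc m < n" using True pJ by (metis is_mat_def not_le one_neq_zero)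
    have ein: "evec (Suc m) \<in> SS" using less(1)[of "Suc m"] sm less(2) by simp
    have "(\<lambda>i. mvec n J (evec (Suc m)) i + (- J (Suc m) (Suc m)) * evec (Suc m) i) \<in> SS"
      by (intro SS_add SS_smult gen_X ein)
    moreover have "(\<lambda>i. mvec n J (evec (Suc m)) i + (- J (Suc m) (Suc m)) * evec (Suc m) i) = evec m"
    proof (intro ext)
      fix i
      have mv: "mvec n J (evec (Suc m)) i = J i (Suc m)"
      proof -
        have "mvec n J (evec (Suc m)) i = (\<Sum>l<n. if l = Suc m then J i (Suc m) else 0)"
          unfolding mvec_def evec_def by (intro sum.cong) auto
        then show ?thesis using sm by simp
      qed
      have c3: "J m m = J (Suc m) (Suc m)" using J True by (simp add: jlike_def)
      show "mvec n J (evec (Suc m)) i + (- J (Suc m) (Suc m)) * evec (Suc m) i = evec m i"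
      proof (cases "i = m")
        case True then show ?thesis using mv \<open>J m (Suc m) = 1\<close> by (simp add: evec_def)
      next
        case False
        have "J i (Suc m) \<noteq> 0 \<Longrightarrow> i = Suc m"
          using J False by (auto simp: jlike_def)
        then show ?thesis using mv False by (cases "i = Suc m") (auto simp: evec_def)
      qed
    qed
    ultimately show ?thesis by simp
  next
    case False
    have "(\<lambda>i. if beta J i = beta J m then wvec n J i else 0) = evec m"
    proof (intro ext)
      fix i
      show "(if beta J i = beta J m then wvec n J i else 0) = evec m i"
      proof (cases "i = m")
        case True then show ?thesis using False less(2) by (simp add: wvec_def evec_def)
      next
        case ne: False
        show ?thesis
        proof (cases "i < n \<and> J i (Suc i) \<noteq> 1")
          case True
          have "beta J i \<noteq> beta J m"
          proof (cases "i < m")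
            case True then show ?thesis using beta_strict[of i m J] \<open>i < n \<and> J i (Suc i) \<noteq> 1\<close> by simp
          next
            case False then have "m < i" using ne by simp
            then show ?thesis using beta_strict[of m i J] \<open>J m (Suc m) \<noteq> 1\<close> by simp
          qed
          then show ?thesis using ne by (simp add: evec_def)
        next
          case False then show ?thesis using ne by (auto simp: wvec_def evec_def)
        qed
      qed
    qed
    then show ?thesis using proj_in[of "beta J m"] by simp
  qed
qed

lemma all_in: assumes v: "is_vec n v" shows "v \<in> SS"
proof -
  have "k \<le> n \<Longrightarrow> (\<lambda>i. \<Sum>m<k. v m * evec m i) \<in> SS" for k
  proof (induct k)
    case 0 then show ?case by (simp add: gen_zero)
  next
    case (Suc k)
    then have "(\<lambda>i. (\<Sum>m<k. v m * evec m i) + v k * evec k i) \<in> SS"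
      by (intro SS_add SS_smult e_in) auto
    then show ?case by simp
  qed
  from this[of n] have "(\<lambda>i. \<Sum>m<n. v m * evec m i) \<in> SS" by simp
  moreover have "(\<lambda>i. \<Sum>m<n. v m * evec m i) = v"
  proof (intro ext)
    fix i
    have "(\<Sum>m<n. v m * evec m i) = (\<Sum>m<n. if m = i then v i else 0)"
      by (intro sum.cong) (auto simp: evec_def)
    then show "(\<Sum>m<n. v m * evec m i) = v i" using v by (auto simp: is_vec_def)
  qed
  ultimately show ?thesis by simp
qed

end

definition fm :: "complex Matrix.mat \<Rightarrow> cmat" where
  "fm A = (\<lambda>i j. if i < dim_row A \<and> j < dim_col A then A $$ (i,j) else 0)"

lemma fm_is_mat: "A \<in> carrier_mat n n \<Longrightarrow> is_mat n n (fm A)"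
  by (auto simp: fm_def is_mat_def)

lemma fm_mult: assumes A: "A \<in> carrier_mat n n" and B: "B \<in> carrier_mat n n"
  shows "fm (A * B) = mmul n (fm A) (fm B)"
proof (intro ext)
  fix i j
  show "fm (A * B) i j = mmul n (fm A) (fm B) i j"
  proof (cases "i < n \<and> j < n")
    case True
    then have "fm (A * B) i j = (\<Sum>l\<in>{0..<n}. A $$ (i,l) * B $$ (l,j))"
      using A B by (simp add: fm_def scalar_prod_def)
    also have "\<dots> = mmul n (fm A) (fm B) i j"
      using A B True by (simp add: mmul_def fm_def atLeast0LessThan)
    finally show ?thesis .
  next
    case False then show ?thesis using A B by (auto simp: mmul_def fm_def)
  qed
qed

lemma fm_one: "fm (1\<^sub>m n) = id_mat n"
  by (intro ext) (auto simp: fm_def id_mat_def)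

lemma fm_to: "is_mat n n X \<Longrightarrow> fm (Matrix.mat n n (\<lambda>(i,j). X i j)) = X"
  by (intro ext) (auto simp: fm_def is_mat_def)

definition jl_mat :: "complex Matrix.mat \<Rightarrow> bool" where
  "jl_mat M \<longleftrightarrow> dim_row M = dim_col M \<and>
    (\<forall>i j. i < dim_row M \<longrightarrow> j < dim_row M \<longrightarrow> M $$ (i,j) \<noteq> 0 \<longrightarrow> j = i \<or> j = Suc i) \<and>
    (\<forall>i. Suc i < dim_row M \<longrightarrow> M $$ (i,Suc i) = 0 \<or> M $$ (i,Suc i) = 1) \<and>
    (\<forall>i. Suc i < dim_row M \<longrightarrow> M $$ (i,Suc i) = 1 \<longrightarrow> M $$ (i,i) = M $$ (Suc i,Suc i))"

lemma jl_block: "jl_mat (jordan_block k a)"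
  by (auto simp: jl_mat_def)

lemma jl_four: assumes A: "jl_mat A" and B: "jl_mat B"
  shows "jl_mat (four_block_mat A (0\<^sub>m (dim_row A) (dim_col B)) (0\<^sub>m (dim_row B) (dim_col A)) B)"
proof -
  let ?a = "dim_row A" and ?b = "dim_row B"
  have dA: "dim_col A = ?a" and dB: "dim_col B = ?b" using A B by (auto simp: jl_mat_def)
  let ?M = "four_block_mat A (0\<^sub>m (dim_row A) (dim_col B)) (0\<^sub>m (dim_row B) (dim_col A)) B"
  have idx: "i < ?a + ?b \<Longrightarrow> j < ?a + ?b \<Longrightarrow> ?M $$ (i,j) =
     (if i < ?a then if j < ?a then A $$ (i,j) else 0 else if j < ?a then 0 else B $$ (i - ?a, j - ?a))" for i j
    using dA dB by simp
  have dM: "dim_row ?M = ?a + ?b" "dim_col ?M = ?a + ?b" using dA dB by auto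
  show ?thesis unfolding jl_mat_def dM
  proof (intro conjI allI impI)
    fix i j assume i: "i < ?a + ?b" and j: "j < ?a + ?b" and nz: "?M $$ (i,j) \<noteq> 0"
    show "j = i \<or> j = Suc i"
    proof (cases "i < ?a")
      case True
      then have "j < ?a" "A $$ (i,j) \<noteq> 0" using nz idx[OF i j] by (auto split: if_splits)
      then show ?thesis using A True by (auto simp: jl_mat_def)
    next
      case False
      then have "\<not> j < ?a" "B $$ (i - ?a, j - ?a) \<noteq> 0" using nz idx[OF i j] by (auto split: if_splits)
      then have "j - ?a = i - ?a \<or> j - ?a = Suc (i - ?a)" using B i j False by (auto simp: jl_mat_def)
      then show ?thesis using False \<open>\<not> j < ?a\<close> by auto
    qed
  next
    fix i assume i: "Suc i < ?a + ?b"
    have ii: "i < ?a + ?b" using i by simp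
    show "?M $$ (i, Suc i) = 0 \<or> ?M $$ (i, Suc i) = 1"
    proof (cases "Suc i < ?a")
      case True then show ?thesis using A idx[OF ii i] by (auto simp: jl_mat_def)
    next
      case False
      show ?thesis
      proof (cases "i < ?a")
        case True then show ?thesis using False idx[OF ii i] by simp
      next
        case f2: False
        then have "Suc i - ?a = Suc (i - ?a)" "Suc (i - ?a) < ?b" using i by auto
        then show ?thesis using B idx[OF ii i] f2 False by (auto simp: jl_mat_def)
      qed
    qed
  next
    fix i assume i: "Suc i < ?a + ?b" and one: "?M $$ (i, Suc i) = 1"
    have ii: "i < ?a + ?b" using i by simp
    show "?M $$ (i, i) = ?M $$ (Suc i, Suc i)"
    proof (cases "Suc i < ?a")
      case True then show ?thesis using A idx[OF ii i] idx[OF ii ii] idx[OF i i] one by (auto simp: jl_mat_def)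
    next
      case False
      show ?thesis
      proof (cases "i < ?a")
        case True then show ?thesis using False idx[OF ii i] one by simp
      next
        case f2: False
        then have e: "Suc i - ?a = Suc (i - ?a)" "Suc (i - ?a) < ?b" using i by auto
        then show ?thesis using B idx[OF ii i] idx[OF ii ii] idx[OF i i] f2 False one by (auto simp: jl_mat_def)
      qed
    qed
  qed simp
qed

lemma jl_jordan: "jl_mat (jordan_matrix n_as)"
proof (induct n_as)
  case Nil then show ?case by (simp add: jordan_matrix_def jl_mat_def)
next
  case (Cons na n_as)
  obtain k a where na: "na = (k,a)" by force
  have "jordan_matrix (na # n_as) = four_block_mat (jordan_block k a)
    (0\<^sub>m (dim_row (jordan_block k a)) (dim_col (jordan_matrix n_as)))
    (0\<^sub>m (dim_row (jordan_matrix n_as)) (dim_col (jordan_block k a))) (jordan_matrix n_as)"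
    by (simp add: jordan_matrix_def na Let_def)
  then show ?case using jl_four[OF jl_block Cons] by simp
qed

lemma jl_jlike: assumes "jl_mat M" "M \<in> carrier_mat n n" shows "jlike n (fm M)"
  using assms unfolding jlike_def jl_mat_def
  by (auto simp: is_mat_def fm_def)

lemma jordan_padded: assumes X: "is_mat n n X"
  shows "\<exists>P Q J. is_mat n n P \<and> is_mat n n Q \<and> jlike n J \<and> mmul n P Q = id_mat n \<and>
      mmul n Q P = id_mat n \<and> X = mmul n (mmul n P J) Q"
proof -
  let ?A = "Matrix.mat n n (\<lambda>(i,j). X i j) :: complex Matrix.mat"
  have A: "?A \<in> carrier_mat n n" by simp
  obtain as where "char_poly ?A = (\<Prod> a \<leftarrow> as. [:- a, 1:])" using char_poly_factorized[OF A] by blast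
  then obtain n_as where "jordan_nf ?A n_as" using jordan_nf_exists[OF A] by blast
  then obtain P Q where wit: "similar_mat_wit ?A (jordan_matrix n_as) P Q"
    unfolding jordan_nf_def similar_mat_def by blast
  let ?J = "jordan_matrix n_as"
  have c: "?J \<in> carrier_mat n n" "P \<in> carrier_mat n n" "Q \<in> carrier_mat n n"
    and PQ: "P * Q = 1\<^sub>m n" and QP: "Q * P = 1\<^sub>m n" and AP: "?A = P * ?J * Q"
    using wit unfolding similar_mat_wit_def Let_def by auto
  have "X = fm ?A" using fm_to[OF X] by simp
  also have "\<dots> = mmul n (mmul n (fm P) (fm ?J)) (fm Q)"
    unfolding AP using c by (simp add: fm_mult mmul_assoc)
  finally have XP: "X = mmul n (mmul n (fm P) (fm ?J)) (fm Q)" .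
  show ?thesis
    apply (rule exI[of _ "fm P"], rule exI[of _ "fm Q"], rule exI[of _ "fm ?J"])
    using c XP jl_jlike[OF jl_jordan c(1)] fm_is_mat fm_mult[of P n Q] fm_mult[of Q n P] PQ QP
    by (simp add: fm_one)
qed

lemma gen_transfer:
  assumes PQ: "mmul n Q P = id_mat n"
    and XA: "X = mmul n (mmul n P A) Q" and ZB: "Z = mmul n (mmul n P B) Q"
  shows "v \<in> gen_space n A B G \<Longrightarrow> mvec n P v \<in> gen_space n X Z ((mvec n P) ` G)"
proof (induct rule: gen_space.induct)
  case (gen_base v) then show ?case by (intro gen_space.gen_base) auto
next
  case gen_zero then show ?case by (simp add: mvec_zero gen_space.gen_zero)
next
  case (gen_add v w) then show ?case by (simp add: mvec_add gen_space.gen_add)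
next
  case (gen_smult v c) then show ?case by (simp add: mvec_smult gen_space.gen_smult)
next
  case (gen_X v)
  have "mvec n X (mvec n P v) = mvec n P (mvec n A (mvec n (mmul n Q P) v))"
    unfolding XA by (simp add: mvec_mmul)
  also have "\<dots> = mvec n P (mvec n A v)" unfolding PQ by (simp add: mvec_id_inner)
  finally show ?case using gen_space.gen_X[OF gen_X(2)] by simp
next
  case (gen_Y v)
  have "mvec n Z (mvec n P v) = mvec n P (mvec n B (mvec n (mmul n Q P) v))"
    unfolding ZB by (simp add: mvec_mmul)
  also have "\<dots> = mvec n P (mvec n B v)" unfolding PQ by (simp add: mvec_id_inner)
  finally show ?case using gen_space.gen_Y[OF gen_Y(2)] by simp
qed

lemma cyclic_partner: assumes X: "is_mat n n X"
  shows "\<exists>Z w. is_mat n n Z \<and> is_vec n w \<and> mmul n X Z = mmul n Z X \<and>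
     {v. is_vec n v} \<subseteq> gen_space n X Z {w}"
proof -
  obtain P Q J where P: "is_mat n n P" and Q: "is_mat n n Q" and J: "jlike n J"
    and PQ: "mmul n P Q = id_mat n" and QP: "mmul n Q P = id_mat n" and XJ: "X = mmul n (mmul n P J) Q"
    using jordan_padded[OF X] by blast
  let ?D = "dmat n J"
  let ?Z = "mmul n (mmul n P ?D) Q"
  let ?w = "mvec n P (wvec n J)"
  have pJ: "is_mat n n J" using J by (simp add: jlike_def)
  have pZ: "is_mat n n ?Z" using P Q by (intro is_mat_mmul is_mat_dmat)
  have pw: "is_vec n ?w" using P by (rule is_vec_mvec)
  have "mmul n X ?Z = mmul n P (mmul n J (mmul n (mmul n Q P) (mmul n ?D Q)))"
    unfolding XJ by (simp add: mmul_assoc)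
  also have "\<dots> = mmul n P (mmul n (mmul n J ?D) Q)"
    unfolding QP using is_mat_mmul[OF is_mat_dmat Q, of J] by (simp add: id_left mmul_assoc)
  also have "\<dots> = mmul n P (mmul n (mmul n ?D J) Q)" using jlike_comm[OF J] by simp
  also have "\<dots> = mmul n P (mmul n ?D (mmul n (mmul n Q P) (mmul n J Q)))"
    unfolding QP using is_mat_mmul[OF pJ Q] by (simp add: id_left mmul_assoc)
  also have "\<dots> = mmul n ?Z X" unfolding XJ by (simp add: mmul_assoc)
  finally have comm: "mmul n X ?Z = mmul n ?Z X" .
  have "{v. is_vec n v} \<subseteq> gen_space n X ?Z {?w}"
  proof
    fix x assume x: "x \<in> {v. is_vec n v}"
    have "mvec n Q x \<in> gen_space n J ?D {wvec n J}" using all_in[OF J is_vec_mvec[OF Q]] .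
    from gen_transfer[OF QP XJ refl this] have "mvec n P (mvec n Q x) \<in> gen_space n X ?Z {?w}" by simp
    moreover have "mvec n P (mvec n Q x) = x" using x by (simp add: mvec_mmul[symmetric] PQ mvec_id)
    ultimately show "x \<in> gen_space n X ?Z {?w}" by simp
  qed
  then show ?thesis using pZ pw comm by blast
qed

datatype ex = EB | EZ | EA ex ex | ES complex ex | EMX ex | EMY ex

primrec ev :: "nat \<Rightarrow> cmat \<Rightarrow> cmat \<Rightarrow> cvec \<Rightarrow> ex \<Rightarrow> cvec" where
  "ev n A B b EB = b"
| "ev n A B b EZ = (\<lambda>i. 0)"
| "ev n A B b (EA e1 e2) = (\<lambda>i. ev n A B b e1 i + ev n A B b e2 i)"
| "ev n A B b (ES c e) = (\<lambda>i. c * ev n A B b e i)"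
| "ev n A B b (EMX e) = mvec n A (ev n A B b e)"
| "ev n A B b (EMY e) = mvec n B (ev n A B b e)"

lemma gen_ex: "u \<in> gen_space n A B {b} \<Longrightarrow> \<exists>e. u = ev n A B b e"
proof (induct rule: gen_space.induct)
  case (gen_base v) then show ?case by (intro exI[of _ EB]) simp
next
  case gen_zero then show ?case by (intro exI[of _ EZ]) simp
next
  case (gen_add v w) then obtain e1 e2 where "v = ev n A B b e1" "w = ev n A B b e2" by blast
  then show ?case by (intro exI[of _ "EA e1 e2"]) simp
next
  case (gen_smult v c) then obtain e where "v = ev n A B b e" by blast
  then show ?case by (intro exI[of _ "ES c e"]) simp
next
  case (gen_X v) then obtain e where "v = ev n A B b e" by blast
  then show ?case by (intro exI[of _ "EMX e"]) simp
next
  case (gen_Y v) then obtain e where "v = ev n A B b e" by blast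
  then show ?case by (intro exI[of _ "EMY e"]) simp
qed

lemma ex_gen: "ev n A B b e \<in> gen_space n A B {b}"
  by (induct e) (auto intro: gen_space.intros)

lemma gen_vec: assumes "is_mat n n A" "is_mat n n B" "\<And>g. g \<in> G \<Longrightarrow> is_vec n g"
  shows "u \<in> gen_space n A B G \<Longrightarrow> is_vec n u"
proof (induct rule: gen_space.induct)
  case (gen_X v) show ?case by (rule is_vec_mvec[OF assms(1)])
next
  case (gen_Y v) show ?case by (rule is_vec_mvec[OF assms(2)])
qed (insert assms(3), auto simp: is_vec_def)

lemma gen_scale: "u \<in> gen_space n A (\<lambda>i j. c * B i j) {\<lambda>i. c * b i} \<Longrightarrow> u \<in> gen_space n A B {b}"
proof (induct rule: gen_space.induct)
  case (gen_base v)
  then show ?case by (auto intro: gen_space.intros)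
next
  case (gen_Y v)
  have "mvec n (\<lambda>i j. c * B i j) v = (\<lambda>i. c * mvec n B v i)"
    by (simp add: mvec_def sum_distrib_left mult.assoc)
  then show ?case using gen_Y by (auto intro: gen_space.intros)
qed (auto intro: gen_space.intros)

lemma gen_sum: "finite F \<Longrightarrow> (\<And>r. r \<in> F \<Longrightarrow> f r \<in> gen_space n A B G) \<Longrightarrow>
  (\<lambda>i. \<Sum>r\<in>F. f r i) \<in> gen_space n A B G"
proof (induct F rule: finite_induct)
  case empty then show ?case by (simp add: gen_space.gen_zero)
next
  case (insert x F) then show ?case by (simp add: gen_space.gen_add)
qed

definition polyfun :: "(complex \<Rightarrow> complex) \<Rightarrow> bool" where
  "polyfun f \<longleftrightarrow> (\<exists>p. \<forall>s. f s = poly p s)"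

lemma polyfun_const: "polyfun (\<lambda>s. c)"
  unfolding polyfun_def by (intro exI[of _ "[:c:]"]) simp
lemma polyfun_id: "polyfun (\<lambda>s. s)"
  unfolding polyfun_def by (intro exI[of _ "[:0,1:]"]) simp
lemma polyfun_add: "polyfun f \<Longrightarrow> polyfun g \<Longrightarrow> polyfun (\<lambda>s. f s + g s)"
  unfolding polyfun_def by (metis poly_add)
lemma polyfun_mult: "polyfun f \<Longrightarrow> polyfun g \<Longrightarrow> polyfun (\<lambda>s. f s * g s)"
  unfolding polyfun_def by (metis poly_mult)
lemma polyfun_sum: "finite F \<Longrightarrow> (\<And>r. r \<in> F \<Longrightarrow> polyfun (f r)) \<Longrightarrow> polyfun (\<lambda>s. \<Sum>r\<in>F. f r s)"
  by (induct F rule: finite_induct) (auto intro: polyfun_add polyfun_const)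
lemma polyfun_prod: "finite F \<Longrightarrow> (\<And>r. r \<in> F \<Longrightarrow> polyfun (f r)) \<Longrightarrow> polyfun (\<lambda>s. \<Prod>r\<in>F. f r s)"
  by (induct F rule: finite_induct) (auto intro: polyfun_mult polyfun_const)

lemma polyfun_ev: "polyfun (\<lambda>s. ev n X (\<lambda>i j. Z i j + s * Y i j) (\<lambda>i. w i + s * v i) e i)"
proof (induct e arbitrary: i)
  case EB then show ?case by (auto intro!: polyfun_add polyfun_mult polyfun_const polyfun_id)
next
  case EZ then show ?case by (simp add: polyfun_const)
next
  case (EA e1 e2) then show ?case by (simp add: polyfun_add)
next
  case (ES c e) then show ?case by (simp add: polyfun_mult polyfun_const)
next
  case (EMX e) then show ?case unfolding ev.simps mvec_def
    by (intro polyfun_sum polyfun_mult polyfun_const) auto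
next
  case (EMY e) then show ?case unfolding ev.simps mvec_def
    by (intro polyfun_sum polyfun_mult polyfun_const polyfun_add polyfun_id) auto
qed

lemma generic:
  assumes pX: "is_mat n n X" and pY: "is_mat n n Y" and pZ: "is_mat n n Z"
    and pw: "is_vec n w" and pv: "is_vec n v"
    and cyc: "{x. is_vec n x} \<subseteq> gen_space n X Z {w}"
  shows "\<exists>R. \<forall>s. R < norm s \<longrightarrow>
    {x. is_vec n x} \<subseteq> gen_space n X (\<lambda>i j. Z i j + s * Y i j) {\<lambda>i. w i + s * v i}"
proof -
  have "\<forall>r. \<exists>e. r < n \<longrightarrow> evec r = ev n X Z w e"
  proof
    fix r
    show "\<exists>e. r < n \<longrightarrow> evec r = ev n X Z w e"
    proof (cases "r < n")
      case True
      then have "evec r \<in> gen_space n X Z {w}" using cyc by (auto simp: is_vec_def evec_def)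
      then show ?thesis using gen_ex by blast
    qed simp
  qed
  then obtain E where E: "\<And>r. r < n \<Longrightarrow> evec r = ev n X Z w (E r)" by metis
  define Zs where "Zs s = (\<lambda>i j. Z i j + s * Y i j)" for s :: complex
  define ws where "ws s = (\<lambda>i. w i + s * v i)" for s :: complex
  define U where "U s r = ev n X (Zs s) (ws s) (E r)" for s r
  define M where "M s = Matrix.mat n n (\<lambda>(i,r). U s r i)" for s
  have Mc: "M s \<in> carrier_mat n n" for s by (simp add: M_def)
  have pU: "is_vec n (U s r)" for s r
  proof -
    have "is_mat n n (Zs s)" using pZ pY by (auto simp: is_mat_def Zs_def)
    moreover have "is_vec n (ws s)" using pw pv by (auto simp: is_vec_def ws_def)
    ultimately show ?thesis unfolding U_def using gen_vec[OF pX _ _ ex_gen] by blast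
  qed
  have "polyfun (\<lambda>s. Determinant.det (M s))"
  proof -
    have "Determinant.det (M s) = (\<Sum>p\<in>{p. p permutes {0..<n}}. signof p * (\<Prod>i\<in>{0..<n}. U s (p i) i))" for s
      unfolding det_def'[OF Mc]
    proof (intro sum.cong refl arg_cong2[where f = "(*)"] prod.cong)
      fix p i assume "p \<in> {p. p permutes {0..<n}}" "i \<in> {0..<n}"
      then have "p i < n" using permutes_in_image by fastforce
      then show "M s $$ (i, p i) = U s (p i) i" using \<open>i \<in> {0..<n}\<close> by (simp add: M_def)
    qed
    moreover have "polyfun (\<lambda>s. \<Sum>p\<in>{p. p permutes {0..<n}}. signof p * (\<Prod>i\<in>{0..<n}. U s (p i) i))"
      unfolding U_def Zs_def ws_def
      by (intro polyfun_sum polyfun_mult polyfun_const polyfun_prod polyfun_ev finite_permutations) auto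
    ultimately show ?thesis by simp
  qed
  then obtain p where p: "\<And>s. Determinant.det (M s) = poly p s" unfolding polyfun_def by blast
  have M0: "M 0 = 1\<^sub>m n"
  proof -
    have "Zs 0 = Z" "ws 0 = w" by (auto simp: Zs_def ws_def)
    then have "U 0 r = evec r" if "r < n" for r using E[OF that] by (simp add: U_def)
    then show ?thesis by (intro eq_matI) (auto simp: M_def evec_def)
  qed
  have "poly p 0 = 1" using p[of 0] M0 by simp
  then have "p \<noteq> 0" by auto
  then have "finite {s. poly p s = 0}" by (rule poly_roots_finite)
  then have "bounded {s. poly p s = 0}" by (rule finite_imp_bounded)
  then obtain R where R: "\<And>s. poly p s = 0 \<Longrightarrow> norm s \<le> R" unfolding bounded_iff by blast
  have "{x. is_vec n x} \<subseteq> gen_space n X (Zs s) {ws s}" if s: "R < norm s" for s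
  proof
    fix x assume x: "x \<in> {x. is_vec n x}"
    let ?d = "Determinant.det (M s)"
    have d: "?d \<noteq> 0" using R[of s] s p[of s] by auto
    let ?xv = "vec n x"
    let ?y = "adj_mat (M s) *\<^sub>v ?xv"
    have "M s *\<^sub>v ?y = (M s * adj_mat (M s)) *\<^sub>v ?xv"
      using assoc_mult_mat_vec[OF Mc[of s] adj_mat(1)[OF Mc[of s]], of ?xv] by simp
    also have "\<dots> = (?d \<cdot>\<^sub>m 1\<^sub>m n) *\<^sub>v ?xv" using adj_mat(2)[OF Mc[of s]] by simp
    also have "\<dots> = ?d \<cdot>\<^sub>v (1\<^sub>m n *\<^sub>v ?xv)" by auto
    also have "\<dots> = ?d \<cdot>\<^sub>v ?xv" by simp
    finally have eq: "M s *\<^sub>v ?y = ?d \<cdot>\<^sub>v ?xv" .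
    have ydim: "dim_vec ?y = n" using adj_mat(1)[OF Mc[of s]] by simp
    let ?x' = "\<lambda>i. \<Sum>r\<in>{0..<n}. (?y $ r / ?d) * U s r i"
    have "?x' \<in> gen_space n X (Zs s) {ws s}"
      by (intro gen_sum gen_space.gen_smult) (auto simp: U_def ex_gen)
    moreover have "?x' = x"
    proof (intro ext)
      fix i
      show "?x' i = x i"
      proof (cases "i < n")
        case True
        have "(M s *\<^sub>v ?y) $ i = ?d * x i" using eq True by simp
        moreover have "(M s *\<^sub>v ?y) $ i = (\<Sum>r\<in>{0..<n}. U s r i * ?y $ r)"
          using True ydim by (simp add: M_def scalar_prod_def)
        ultimately have "(\<Sum>r\<in>{0..<n}. U s r i * ?y $ r) = ?d * x i" by simp
        then have "(\<Sum>r\<in>{0..<n}. U s r i * ?y $ r) / ?d = x i" using d by simp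
        then show ?thesis by (simp add: sum_divide_distrib mult.commute)
      next
        case False then show ?thesis using x pU by (simp add: is_vec_def)
      qed
    qed
    ultimately show "x \<in> gen_space n X (Zs s) {ws s}" by simp
  qed
  then show ?thesis unfolding Zs_def ws_def by blast
qed

lemma generic_small:
  assumes pX: "is_mat n n X" and pY: "is_mat n n Y" and pZ: "is_mat n n Z"
    and pw: "is_vec n w" and pv: "is_vec n v"
    and cyc: "{x. is_vec n x} \<subseteq> gen_space n X Z {w}"
  shows "\<exists>d>0. \<forall>t. t \<noteq> 0 \<longrightarrow> norm t < d \<longrightarrow>
    {x. is_vec n x} \<subseteq> gen_space n X (\<lambda>i j. Y i j + t * Z i j) {\<lambda>i. v i + t * w i}"
proof -
  obtain R where R: "\<And>s. R < norm s \<Longrightarrow>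
    {x. is_vec n x} \<subseteq> gen_space n X (\<lambda>i j. Z i j + s * Y i j) {\<lambda>i. w i + s * v i}"
    using generic[OF assms] by blast
  define R' where "R' = max R 1"
  have R'pos: "R' > 0" by (simp add: R'_def)
  show ?thesis
  proof (intro exI[of _ "1 / R'"] conjI allI impI)
    show "1 / R' > 0" using R'pos by simp
    fix t :: complex assume t0: "t \<noteq> 0" and tn: "norm t < 1 / R'"
    let ?s = "1 / t"
    have "R' < norm ?s" using tn t0 R'pos by (simp add: norm_divide field_simps)
    then have "R < norm ?s" by (simp add: R'_def)
    from R[OF this] have sub: "{x. is_vec n x} \<subseteq> gen_space n X (\<lambda>i j. Z i j + ?s * Y i j) {\<lambda>i. w i + ?s * v i}" .
    have e1: "(\<lambda>i j. Z i j + ?s * Y i j) = (\<lambda>i j. ?s * (Y i j + t * Z i j))"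
      using t0 by (intro ext) (simp add: field_simps)
    have e2: "(\<lambda>i. w i + ?s * v i) = (\<lambda>i. ?s * (v i + t * w i))"
      using t0 by (intro ext) (simp add: field_simps)
    show "{x. is_vec n x} \<subseteq> gen_space n X (\<lambda>i j. Y i j + t * Z i j) {\<lambda>i. v i + t * w i}"
    proof
      fix x assume "x \<in> {x. is_vec n x}"
      then have "x \<in> gen_space n X (\<lambda>i j. ?s * (Y i j + t * Z i j)) {\<lambda>i. ?s * (v i + t * w i)}"
        using sub unfolding e1 e2 by blast
      then show "x \<in> gen_space n X (\<lambda>i j. Y i j + t * Z i j) {\<lambda>i. v i + t * w i}" by (rule gen_scale)
    qed
  qed
qed

lemma id_left_gen: assumes "is_mat m k A" shows "mmul m (id_mat m) A = A"
proof (intro ext)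
  fix i j
  show "mmul m (id_mat m) A i j = A i j"
  proof (cases "i < m")
    case True
    have "mmul m (id_mat m) A i j = (\<Sum>l<m. if l = i then A i j else 0)"
      unfolding mmul_def id_mat_def by (intro sum.cong) auto
    also have "\<dots> = A i j" using True by simp
    finally show ?thesis .
  next
    case False then show ?thesis using assms by (simp add: mmul_def id_mat_def is_mat_def)
  qed
qed

lemma id_right_gen: assumes "is_mat k m A" shows "mmul m A (id_mat m) = A"
proof (intro ext)
  fix i j
  show "mmul m A (id_mat m) i j = A i j"
  proof (cases "j < m")
    case True
    have "mmul m A (id_mat m) i j = (\<Sum>l<m. if l = j then A i j else 0)"
      unfolding mmul_def id_mat_def by (intro sum.cong) auto
    also have "\<dots> = A i j" using True by simp
    finally show ?thesis .
  next
    case False then show ?thesis using assms by (simp add: mmul_def id_mat_def is_mat_def)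
  qed
qed

lemma quiv_exhaust: "\<exists>X Y I J Xt Yt It Jt S. (q::quiv) = (X, Y, I, J, Xt, Yt, It, Jt, S)"
  by (cases q) auto

definition jtp :: "quiv \<Rightarrow> cmat" where
  "jtp q = fst (snd (snd (snd (snd (snd (snd (snd q)))))))"

lemma jtp_simp[simp]: "jtp (X, Y, I, J, Xt, Yt, It, Jt, S) = Jt" by (simp add: jtp_def)

lemma act_simp: "act N M1 M2 g gi h hi (X, Y, I, J, Xt, Yt, It, Jt, S) =
     (mmul M1 (mmul M1 g X) gi, mmul M1 (mmul M1 g Y) gi, mmul M1 g I, mmul M1 J gi,
      mmul M2 (mmul M2 h Xt) hi, mmul M2 (mmul M2 h Yt) hi, mmul M2 h It, mmul M2 Jt hi,
      mmul M1 (mmul M2 h S) gi)"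
  by (simp add: act_def)

lemma orbit_self: assumes q: "q \<in> stab_locus N M1 M2" shows "q \<in> orbit N M1 M2 q"
proof -
  obtain X Y I J Xt Yt It Jt S where qe: "q = (X, Y, I, J, Xt, Yt, It, Jt, S)"
    using quiv_exhaust by blast
  have inv1: "Defs.invertible_mat M1 (id_mat M1) (id_mat M1)"
    by (simp add: Defs.invertible_mat_def is_mat_id id_left)
  have inv2: "Defs.invertible_mat M2 (id_mat M2) (id_mat M2)"
    by (simp add: Defs.invertible_mat_def is_mat_id id_left)
  have "act N M1 M2 (id_mat M1) (id_mat M1) (id_mat M2) (id_mat M2) q = q"
    using q unfolding qe act_simp stab_locus_def
    using q unfolding qe act_simp stab_locus_def
    by (auto simp: id_left_gen id_right_gen)
  then show ?thesis unfolding orbit_def mem_Collect_eq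
    by (intro exI[of _ "id_mat M1"] exI[of _ "id_mat M2"] conjI inv1 inv2) simp
qed

lemma orbit_jt0: assumes "p \<in> orbit N M1 M2 q" "jtp q = Defs.zero_mat" shows "jtp p = Defs.zero_mat"
proof -
  obtain X Y I J Xt Yt It Jt S where qe: "q = (X, Y, I, J, Xt, Yt, It, Jt, S)"
    using quiv_exhaust by blast
  from assms(1) obtain g gi h hi where "p = act N M1 M2 g gi h hi q" unfolding orbit_def by blast
  then have "jtp p = mmul M2 Jt hi" unfolding qe act_simp by simp
  moreover have "Jt = Defs.zero_mat" using assms(2) qe by simp
  ultimately show ?thesis by (simp add: mmul_def Defs.zero_mat_def)
qed

lemma orbit_eq_jt0:
  assumes "p \<in> stab_locus N M1 M2" "orbit N M1 M2 p = orbit N M1 M2 q" "jtp q = Defs.zero_mat"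
  shows "jtp p = Defs.zero_mat"
proof -
  have "jtp q = Defs.zero_mat \<Longrightarrow> jtp p = Defs.zero_mat"
    using orbit_jt0[of p N M1 M2 q] orbit_self[OF assms(1)] assms(2) by simp
  then show ?thesis using assms(3) .
qed

definition "opart N M1 M2 = {(X, Y, I, J, Xt, Yt, It, Jt, S) \<in> stab_locus N M1 M2.
      {v. is_vec M2 v} \<subseteq> gen_space M2 Xt Yt (img 1 It)}"
definition "zpart N M1 M2 = {(X, Y, I, J, Xt, Yt, It, Jt, S) \<in> stab_locus N M1 M2. Jt = Defs.zero_mat}"

lemma opart_zpart: "p \<in> opart N M1 M2 \<Longrightarrow> jtp p = Defs.zero_mat"
proof -
  assume p: "p \<in> opart N M1 M2"
  obtain X Y I J Xt Yt It Jt S where qe: "p = (X, Y, I, J, Xt, Yt, It, Jt, S)"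
    using quiv_exhaust by blast
  have h: "is_mat M2 M2 Xt" "is_mat M2 M2 Yt" "is_mat M2 1 It" "is_mat 1 M2 Jt"
    "(\<lambda>i j. mmul M2 Xt Yt i j - mmul M2 Yt Xt i j + mmul 1 It Jt i j) = Defs.zero_mat"
    "{v. is_vec M2 v} \<subseteq> gen_space M2 Xt Yt (img 1 It)"
    using p unfolding qe opart_def stab_locus_def by auto
  have "Jt = Defs.zero_mat" by (rule nakajima[OF h])
  then show ?thesis by (simp add: qe)
qed

lemma gen_mono: "u \<in> gen_space n A B G \<Longrightarrow> G \<subseteq> H \<Longrightarrow> u \<in> gen_space n A B H"
  by (induct rule: gen_space.induct) (auto intro: gen_space.intros)

lemma cont_coord: "continuous_on UNIV (\<lambda>f::cmat. f i j)"
proof -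
  have "continuous_on UNIV (\<lambda>f::cmat. f i)" by (rule continuous_on_product_coordinates)
  then show ?thesis by (rule continuous_on_product_then_coordinatewise)
qed

lemma cont_line: "continuous_on UNIV (\<lambda>t::complex. (\<lambda>i j. A i j + t * B i j) :: cmat)"
  apply (rule continuous_on_coordinatewise_then_product)
  apply (rule continuous_on_coordinatewise_then_product)
  apply (intro continuous_on_add continuous_on_mult continuous_on_const continuous_on_id)
  done

lemma density:
  assumes q: "q \<in> zpart N M1 M2" and U: "open U" and qU: "q \<in> U"
  shows "\<exists>q'\<in>U. q' \<in> opart N M1 M2"
proof -
  obtain X Y I J Xt Yt It Jt S where qe: "q = (X, Y, I, J, Xt, Yt, It, Jt, S)"
    using quiv_exhaust by blast
  have st: "is_mat M1 M1 X" "is_mat M1 M1 Y" "is_mat M1 N I" "is_mat N M1 J"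
     "is_mat M2 M2 Xt" "is_mat M2 M2 Yt" "is_mat M2 1 It" "is_mat 1 M2 Jt" "is_mat M2 M1 S"
     "(\<lambda>i j. mmul M1 X Y i j - mmul M1 Y X i j + mmul N I J i j) = Defs.zero_mat"
     "(\<lambda>i j. mmul M2 Xt Yt i j - mmul M2 Yt Xt i j + mmul 1 It Jt i j) = Defs.zero_mat"
     "{v. is_vec M1 v} \<subseteq> gen_space M1 X Y (img N I)"
    and Jt0: "Jt = Defs.zero_mat"
    using q unfolding qe zpart_def stab_locus_def by auto
  obtain Z w where pZ: "is_mat M2 M2 Z" and pw: "is_vec M2 w" and cZ: "mmul M2 Xt Z = mmul M2 Z Xt"
    and cyc: "{v. is_vec M2 v} \<subseteq> gen_space M2 Xt Z {w}"
    using cyclic_partner[OF st(5)] by blast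
  let ?v = "\<lambda>i. It i 0"
  have pv: "is_vec M2 ?v" using st(7) by (simp add: is_vec_def is_mat_def)
  obtain d where d: "d > 0" and dd: "\<And>t. t \<noteq> 0 \<Longrightarrow> norm t < d \<Longrightarrow>
    {x. is_vec M2 x} \<subseteq> gen_space M2 Xt (\<lambda>i j. Yt i j + t * Z i j) {\<lambda>i. ?v i + t * w i}"
    using generic_small[OF st(5) st(6) pZ pw pv cyc] by blast
  define Wm :: cmat where "Wm = (\<lambda>i j. if j = 0 then w i else (0::complex))"
  define phi where "phi t = (X, Y, I, J, Xt, (\<lambda>i j. Yt i j + t * Z i j), (\<lambda>i j. It i j + t * Wm i j), Jt, S)" for t
  have cphi: "continuous_on UNIV phi"
    unfolding phi_def by (intro continuous_on_Pair continuous_on_const cont_line)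
  have "open (phi -` U)" using cphi U continuous_on_open_vimage[OF open_UNIV, of phi] by simp
  moreover have "0 \<in> phi -` U" using qU qe by (simp add: phi_def Wm_def)
  ultimately obtain e where e: "e > 0" "ball 0 e \<subseteq> phi -` U" by (meson open_contains_ball)
  define t where "t = complex_of_real (min e d / 2)"
  have t0: "t \<noteq> 0" and te: "norm t < e" and td: "norm t < d" using e d by (auto simp: t_def)
  have tU: "phi t \<in> U" using e te by (auto simp: dist_norm)
  have comm: "mmul M2 Xt Yt = mmul M2 Yt Xt"
  proof (intro ext)
    fix i j
    have "mmul M2 Xt Yt i j - mmul M2 Yt Xt i j + mmul 1 It Jt i j = 0"
      using fun_cong[OF fun_cong[OF st(11), of i], of j] by (simp add: Defs.zero_mat_def)
    then show "mmul M2 Xt Yt i j = mmul M2 Yt Xt i j" using Jt0 by (simp add: mmul_def Defs.zero_mat_def)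
  qed
  let ?Yt = "\<lambda>i j. Yt i j + t * Z i j" and ?It = "\<lambda>i j. It i j + t * Wm i j"
  have rel2: "(\<lambda>i j. mmul M2 Xt ?Yt i j - mmul M2 ?Yt Xt i j + mmul 1 ?It Jt i j) = Defs.zero_mat"
  proof (intro ext)
    fix i j
    have a: "mmul M2 Xt ?Yt i j = mmul M2 Xt Yt i j + t * mmul M2 Xt Z i j"
      by (simp add: mmul_def algebra_simps sum.distrib sum_distrib_left)
    have b: "mmul M2 ?Yt Xt i j = mmul M2 Yt Xt i j + t * mmul M2 Z Xt i j"
      by (simp add: mmul_def algebra_simps sum.distrib sum_distrib_left)
    show "mmul M2 Xt ?Yt i j - mmul M2 ?Yt Xt i j + mmul 1 ?It Jt i j = Defs.zero_mat i j"
      unfolding a b comm cZ using Jt0 by (simp add: mmul_def Defs.zero_mat_def)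
  qed
  have gsub: "{x. is_vec M2 x} \<subseteq> gen_space M2 Xt ?Yt (img 1 ?It)"
  proof -
    have "(\<lambda>i. ?v i + t * w i) \<in> img 1 ?It"
      unfolding img_def
      by (rule CollectI, rule exI[of _ "\<lambda>i. if i = 0 then 1 else 0"]) (auto simp: mvec_def Wm_def is_vec_def)
    note mem = this
    show ?thesis
    proof
      fix x assume "x \<in> {x. is_vec M2 x}"
      then have "x \<in> gen_space M2 Xt ?Yt {\<lambda>i. ?v i + t * w i}" using dd[OF t0 td] by blast
      then show "x \<in> gen_space M2 Xt ?Yt (img 1 ?It)" by (rule gen_mono) (use mem in blast)
    qed
  qed
  have pYt: "is_mat M2 M2 ?Yt" using st(6) pZ by (auto simp: is_mat_def)
  have pIt: "is_mat M2 1 ?It" using st(7) pw by (auto simp: is_mat_def is_vec_def Wm_def)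
  have gsub2: "{x. is_vec M2 x} \<subseteq> gen_space M2 Xt ?Yt (img 1 ?It \<union> img M1 S)"
  proof
    fix x assume "x \<in> {x. is_vec M2 x}"
    then have "x \<in> gen_space M2 Xt ?Yt (img 1 ?It)" using gsub by blast
    then show "x \<in> gen_space M2 Xt ?Yt (img 1 ?It \<union> img M1 S)" by (rule gen_mono) blast
  qed
  have "phi t \<in> opart N M1 M2"
    unfolding phi_def opart_def stab_locus_def
    using st(1-10) st(12) rel2 gsub gsub2 pYt pIt by simp
  then show ?thesis using tU by blast
qed

lemma opart_stab: "opart N M1 M2 \<subseteq> stab_locus N M1 M2"
  by (auto simp: opart_def)
lemma zpart_stab: "zpart N M1 M2 \<subseteq> stab_locus N M1 M2"
  by (auto simp: zpart_def)

lemma zpart_iff: "q \<in> zpart N M1 M2 \<longleftrightarrow> q \<in> stab_locus N M1 M2 \<and> jtp q = Defs.zero_mat"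
proof -
  obtain X Y I J Xt Yt It Jt S where qe: "q = (X, Y, I, J, Xt, Yt, It, Jt, S)"
    using quiv_exhaust by blast
  show ?thesis unfolding qe zpart_def stab_locus_def by auto
qed

lemma cont_jtp: "continuous_on UNIV (\<lambda>p. jtp p i j)"
proof -
  have c1: "continuous_on UNIV jtp" unfolding jtp_def by (intro continuous_intros)
  have "continuous_on UNIV ((\<lambda>f::cmat. f i j) \<circ> jtp)"
    by (rule continuous_on_compose[OF c1 continuous_on_subset[OF cont_coord]]) simp
  then show ?thesis by (simp add: o_def)
qed

lemma open_jt_nz: "open {p. jtp p \<noteq> Defs.zero_mat}"
proof -
  have "{p. jtp p \<noteq> Defs.zero_mat} = (\<Union>i. \<Union>j. {p. jtp p i j \<noteq> (\<lambda>p. 0) p})"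
    by (auto simp: Defs.zero_mat_def fun_eq_iff)
  also have "open \<dots>"
    by (intro open_UN ballI open_Collect_neq cont_jtp continuous_on_const)
  finally show ?thesis .
qed

theorem proposition3:
  fixes N M1 M2 :: nat
  shows "moduli_Jt0 N M1 M2 = moduli_top N M1 M2 closure_of moduli_open N M1 M2"
proof -
  let ?T = "moduli_top N M1 M2"
  let ?st = "stab_locus N M1 M2"
  let ?orb = "orbit N M1 M2"
  have istop: "istopology (\<lambda>W. W \<subseteq> moduli N M1 M2 \<and> openin (top_of_set ?st) {q \<in> ?st. ?orb q \<in> W})"
    by (rule istopology_preimage)
  have op: "openin ?T W \<longleftrightarrow> W \<subseteq> moduli N M1 M2 \<and> openin (top_of_set ?st) {q \<in> ?st. ?orb q \<in> W}" for W
    unfolding moduli_top_def topology_inverse'[OF istop] by simp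
  have "{q \<in> ?st. ?orb q \<in> moduli N M1 M2} = ?st" by (auto simp: moduli_def)
  then have "openin ?T (moduli N M1 M2)" unfolding op by simp
  then have s1: "moduli N M1 M2 \<subseteq> topspace ?T" by (rule openin_subset)
  have s2: "topspace ?T \<subseteq> moduli N M1 M2" unfolding topspace_def using op by blast
  have tsp: "topspace ?T = moduli N M1 M2" using s1 s2 by blast
  have MO: "moduli_open N M1 M2 = ?orb ` opart N M1 M2" by (simp add: moduli_open_def opart_def)
  have MZ: "moduli_Jt0 N M1 M2 = ?orb ` zpart N M1 M2" by (simp add: moduli_Jt0_def zpart_def)
  show ?thesis
  proof
    show "moduli_Jt0 N M1 M2 \<subseteq> ?T closure_of moduli_open N M1 M2"
    proof
      fix x assume "x \<in> moduli_Jt0 N M1 M2"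
      then obtain q where q: "q \<in> zpart N M1 M2" and xq: "x = ?orb q" unfolding MZ by blast
      have qst: "q \<in> ?st" using q zpart_stab by blast
      have xm: "x \<in> topspace ?T" unfolding tsp moduli_def xq using qst by blast
      show "x \<in> ?T closure_of moduli_open N M1 M2"
        unfolding closure_of_def
      proof (intro CollectI conjI allI impI xm)
        fix W assume W: "x \<in> W \<and> openin ?T W"
        then have "openin (top_of_set ?st) {q \<in> ?st. ?orb q \<in> W}" using op by blast
        then obtain U where U: "open U" and PU: "{q \<in> ?st. ?orb q \<in> W} = ?st \<inter> U"
          unfolding openin_open by blast
        have "q \<in> U" using PU qst W xq by blast
        then obtain q' where q'U: "q' \<in> U" and q'o: "q' \<in> opart N M1 M2"
          using density[OF q U] by blast
        have "q' \<in> ?st" using q'o opart_stab by blast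
        then have "?orb q' \<in> W" using PU q'U by blast
        moreover have "?orb q' \<in> moduli_open N M1 M2" unfolding MO using q'o by blast
        ultimately show "\<exists>y\<in>moduli_open N M1 M2. y \<in> W" by blast
      qed
    qed
  next
    show "?T closure_of moduli_open N M1 M2 \<subseteq> moduli_Jt0 N M1 M2"
    proof
      fix x assume xc: "x \<in> ?T closure_of moduli_open N M1 M2"
      then have "x \<in> moduli N M1 M2" unfolding closure_of_def tsp by blast
      then obtain q where qst: "q \<in> ?st" and xq: "x = ?orb q" unfolding moduli_def by blast
      have "jtp q = Defs.zero_mat"
      proof (rule ccontr)
        assume nz: "jtp q \<noteq> Defs.zero_mat"
        let ?W = "?orb ` {p \<in> ?st. jtp p \<noteq> Defs.zero_mat}"
        have pre1: "jtp p \<noteq> Defs.zero_mat" if p: "p \<in> ?st" "?orb p \<in> ?W" for p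
        proof
          assume p0: "jtp p = Defs.zero_mat"
          from p(2) obtain p' where p': "p' \<in> ?st" "jtp p' \<noteq> Defs.zero_mat" "?orb p = ?orb p'" by auto
          have "jtp p' = Defs.zero_mat" using orbit_eq_jt0[OF p'(1), of p] p'(3) p0 by simp
          then show False using p'(2) by simp
        qed
        have pre: "{p \<in> ?st. ?orb p \<in> ?W} = ?st \<inter> {p. jtp p \<noteq> Defs.zero_mat}"
          using pre1 by blast
        have "?W \<subseteq> moduli N M1 M2" by (auto simp: moduli_def)
        moreover have "openin (top_of_set ?st) (?st \<inter> {p. jtp p \<noteq> Defs.zero_mat})"
          unfolding openin_open using open_jt_nz by blast
        ultimately have oW: "openin ?T ?W" unfolding op pre by blast
        have xW: "x \<in> ?W" using xq qst nz by blast
        have "\<forall>T. x \<in> T \<and> openin ?T T \<longrightarrow> (\<exists>y\<in>moduli_open N M1 M2. y \<in> T)"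
          using xc unfolding closure_of_def by blast
        then have "x \<in> ?W \<and> openin ?T ?W \<longrightarrow> (\<exists>y\<in>moduli_open N M1 M2. y \<in> ?W)" by (rule spec)
        then obtain y where y: "y \<in> moduli_open N M1 M2" "y \<in> ?W" using oW xW by blast
        from y(1) obtain p where p: "p \<in> opart N M1 M2" "y = ?orb p" unfolding MO by blast
        from y(2) obtain p' where p': "p' \<in> ?st" "jtp p' \<noteq> Defs.zero_mat" "y = ?orb p'" by blast
        have "jtp p = Defs.zero_mat" using opart_zpart[OF p(1)] .
        then have "jtp p' = Defs.zero_mat" using orbit_eq_jt0[OF p'(1), of p] p(2) p'(3) by simp
        then show False using p'(2) by simp
      qed
      then have "q \<in> zpart N M1 M2" using qst zpart_iff by blast
      then show "x \<in> moduli_Jt0 N M1 M2" unfolding MZ xq by blast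
    qed
  qed
qed

end
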